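(* Let $q\ge 4$ be even. Suppose there exists a Steiner quadruple system on $B_q$ that satisfies the step property with respect to some total order on $B_q$. Then $N(4,q,1)=\dfrac{q^2(q+2)}{4}$.
   Context: $B_q=\{0,\dots,q-1\}$ and $B_q^n$ is the set of words of length $n$ over $B_q$. $N(n,q,1)$ is the maximum cardinality of a code $C\subseteq B_q^n$ capable of correcting single deletions, i.e. such that the sets $\lfloor x\rfloor_1$ ($x\in C$) of words obtained from $x$ by deleting one letter are pairwise disjoint (equivalently, the minimum deletion–insertion distance of $C$ exceeds 2). A Steiner quadruple system $SQS(q)$ on $B_q$ is a set of 4-element subsets (quadruples) of $B_q$ such that every 3-element subset of $B_q$ is contained in exactly one quadruple. Step property: given a total order $L_0<L_1<\cdots<L_{q-1}$ on $B_q=\{L_0,\dots,L_{q-1}\}$, the $SQS(q)$ satisfies the step property with respect to this order if for every $t\in\{0,\dots,q/2-1\}$ and every quadruple of the system of the form $\{L_{2t},L_{2t+1},L_a,L_b\}$, either $a<2t$ and $b<2t$, or $a>2t+1$ and $b>2t+1$. *)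

theory Defs
  imports Complex_Main
begin

definition words :: "nat \<Rightarrow> nat \<Rightarrow> nat list set" where
  "words n q = {x. length x = n \<and> set x \<subseteq> {..<q}}"

definition del1 :: "nat list \<Rightarrow> nat list set" where
  "del1 x = {take i x @ drop (Suc i) x | i. i < length x}"

definition sdc_code :: "nat \<Rightarrow> nat \<Rightarrow> nat list set \<Rightarrow> bool" where
  "sdc_code n q C \<longleftrightarrow> C \<subseteq> words n q \<and>
     (\<forall>x\<in>C. \<forall>y\<in>C. x \<noteq> y \<longrightarrow> del1 x \<inter> del1 y = {})"

definition N1 :: "nat \<Rightarrow> nat \<Rightarrow> nat" where
  "N1 n q = Max {card C | C. sdc_code n q C}"

definition SQS :: "nat \<Rightarrow> nat set set \<Rightarrow> bool" where
  "SQS q S \<longleftrightarrow> (\<forall>Q\<in>S. Q \<subseteq> {..<q} \<and> card Q = 4) \<and>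
     (\<forall>T. T \<subseteq> {..<q} \<and> card T = 3 \<longrightarrow> (\<exists>!Q. Q \<in> S \<and> T \<subseteq> Q))"

text \<open>Step property w.r.t. the total order L 0 < L 1 < ... < L (q-1),
  where L is a bijection from {0..<q} onto B_q.\<close>
definition step_property :: "nat \<Rightarrow> nat set set \<Rightarrow> (nat \<Rightarrow> nat) \<Rightarrow> bool" where
  "step_property q S L \<longleftrightarrow>
     (\<forall>t < q div 2. \<forall>Q\<in>S. \<forall>a<q. \<forall>b<q.
        Q = {L (2*t), L (2*t+1), L a, L b} \<longrightarrow>
        (a < 2*t \<and> b < 2*t) \<or> (a > 2*t+1 \<and> b > 2*t+1))"

end

theory Submission
  imports Defs
begin


lemma del1_img: "del1 x = (\<lambda>i. take i x @ drop (Suc i) x) ` {..<length x}"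
  unfolding del1_def by auto

lemma del1_4: "del1 [a,b,c,d] = {[b,c,d],[a,c,d],[a,b,d],[a,b,c]}"
  unfolding del1_img by (simp add: numeral_eq_Suc lessThan_Suc insert_commute)

lemma len4: "length x = 4 \<Longrightarrow> x = [x!0, x!1, x!2, x!3]"
  by (cases x; cases "tl x"; cases "tl (tl x)"; cases "tl (tl (tl x))"; auto simp: numeral_eq_Suc)

lemma len3: "length x = 3 \<Longrightarrow> x = [x!0, x!1, x!2]"
  by (cases x; cases "tl x"; cases "tl (tl x)"; auto simp: numeral_eq_Suc)

lemma del1_len: "y \<in> del1 x \<Longrightarrow> length y = length x - 1"
  unfolding del1_def by auto

lemma del1_set: "y \<in> del1 x \<Longrightarrow> set y \<subseteq> set x"
  unfolding del1_def by (auto dest: in_set_takeD in_set_dropD)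

lemma words_fin: "finite (words n q)"
proof -
  have "words n q \<subseteq> {xs. set xs \<subseteq> {..<q} \<and> length xs = n}" unfolding words_def by auto
  thus ?thesis using finite_lists_length_eq[of "{..<q}" n] finite_subset by blast
qed



definition w :: "nat list \<Rightarrow> real" where
 "w y = (if y!0 = y!1 \<and> y!1 = y!2 then 1 else if y!0 = y!1 \<or> y!1 = y!2 then 1/2 else 1/4)"

definition cw :: "nat list \<Rightarrow> real" where "cw x = (\<Sum>y\<in>del1 x. w y)"

definition Oa :: "nat list \<Rightarrow> nat set" where
  "Oa x = {a. \<exists>b. b \<noteq> a \<and> [a,b,a] \<in> del1 x}"

definition abca :: "nat list \<Rightarrow> bool" where
  "abca x \<longleftrightarrow> x!0 = x!3 \<and> x!0 \<noteq> x!1 \<and> x!0 \<noteq> x!2 \<and> x!1 \<noteq> x!2"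

lemma w_nonneg: "w y \<ge> 0" by (simp add: w_def)

lemma cw4: "cw [a,b,c,d] = (\<Sum>y\<in>{[b,c,d],[a,c,d],[a,b,d],[a,b,c]}. w y)"
  by (simp add: cw_def del1_4)

lemma cw_ge1: "cw [a,b,c,d] \<ge> 1"
  unfolding cw4
  by (cases "a=b"; cases "a=c"; cases "a=d"; cases "b=c"; cases "b=d"; cases "c=d";
      simp add: w_def)

lemma Oa4: "Oa [a,b,c,d] = {z. (z = b \<and> b = d \<and> c \<noteq> b) \<or> (z = a \<and> ((a = d \<and> c \<noteq> a) \<or> (a=d \<and> b\<noteq>a) \<or> (a = c \<and> b \<noteq> a)))}"
  unfolding Oa_def del1_4 by auto

lemma Oa_bound: "\<not> abca [a,b,c,d] \<Longrightarrow> real (card (Oa [a,b,c,d])) / 4 \<le> cw [a,b,c,d] - 1"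
  unfolding cw4 Oa4 abca_def
  by (cases "a=b"; cases "a=c"; cases "a=d"; cases "b=c"; cases "b=d"; cases "c=d";
      simp add: w_def Collect_disj_eq)



lemma words3_img: "words 3 q = (\<lambda>(a,b,c). [a,b,c]) ` ({..<q} \<times> {..<q} \<times> {..<q})"
proof
  show "words 3 q \<subseteq> (\<lambda>(a,b,c). [a,b,c]) ` ({..<q} \<times> {..<q} \<times> {..<q})"
  proof
    fix y assume "y \<in> words 3 q"
    hence l: "length y = 3" and s: "set y \<subseteq> {..<q}" by (auto simp: words_def)
    have "y = [y!0,y!1,y!2]" using len3[OF l] .
    moreover have "y!i < q" if "i < 3" for i
    proof -
      have "y!i \<in> set y" using l that by simp
      thus ?thesis using s by blast
    qed
    moreover have "(y!0,y!1,y!2) \<in> {..<q} \<times> {..<q} \<times> {..<q}"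
      using calculation(2)[of 0] calculation(2)[of 1] calculation(2)[of 2] by simp
    ultimately show "y \<in> (\<lambda>(a,b,c). [a,b,c]) ` ({..<q} \<times> {..<q} \<times> {..<q})"
      by (metis (no_types, lifting) image_eqI old.prod.case)
  qed
qed (auto simp: words_def)

lemma sum_words3: "(\<Sum>y\<in>words 3 q. f y) = (\<Sum>a<q. \<Sum>b<q. \<Sum>c<q. f [a,b,c])"
proof -
  have inj: "inj_on (\<lambda>(a,b,c). [a::nat,b,c]) ({..<q} \<times> {..<q} \<times> {..<q})"
    by (auto simp: inj_on_def)
  have "(\<Sum>y\<in>words 3 q. f y) = (\<Sum>p\<in>{..<q} \<times> {..<q} \<times> {..<q}. f ((\<lambda>(a,b,c). [a,b,c]) p))"
    unfolding words3_img by (rule sum.reindex[OF inj, unfolded comp_def])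
  also have "\<dots> = (\<Sum>a<q. \<Sum>b<q. \<Sum>c<q. f [a,b,c])"
    by (simp add: sum.cartesian_product case_prod_beta)
  finally show ?thesis .
qed

lemma w3: "w [a,b,c] = 1/4 + (if a = b then 1/4 else 0) + (if b = c then 1/4 else 0)
   + (if a = b \<and> b = c then 1/4 else 0)"
  by (simp add: w_def)

lemma Wtot: "(\<Sum>y\<in>words 3 q. w y) = real q^3/4 + real q^2/2 + real q/4"
proof -
  have "(\<Sum>c<q. w [a,b,c]) = real q/4 + 1/4 + (if a = b then real q/4 + 1/4 else 0)" if "b < q" for a b
  proof (cases "a = b")
    case True
    hence "w [a,b,c] = 1/2 + (if b = c then 1/2 else 0)" for c by (simp add: w_def)
    thus ?thesis using that True by (simp add: sum.distrib)
  next
    case False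
    hence "w [a,b,c] = 1/4 + (if b = c then 1/4 else 0)" for c by (simp add: w_def)
    thus ?thesis using that False by (simp add: sum.distrib)
  qed
  hence "(\<Sum>b<q. \<Sum>c<q. w [a,b,c]) = real q^2/4 + real q/2 + 1/4" if "a < q" for a
    using that by (simp add: sum.distrib power2_eq_square algebra_simps)
  hence "(\<Sum>a<q. \<Sum>b<q. \<Sum>c<q. w [a,b,c]) = real q * (real q^2/4 + real q/2 + 1/4)"
    by simp
  thus ?thesis unfolding sum_words3 by (simp add: algebra_simps power2_eq_square power3_eq_cube)
qed



lemma words4_obtain:
  assumes "x \<in> words 4 q"
  obtains a b c d where "x = [a,b,c,d]" "a<q" "b<q" "c<q" "d<q"
proof -
  have l: "length x = 4" and s: "set x \<subseteq> {..<q}" using assms by (auto simp: words_def)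
  have e: "x = [x!0,x!1,x!2,x!3]" using len4[OF l] .
  have "set [x!0,x!1,x!2,x!3] \<subseteq> {..<q}" using s e by simp
  thus ?thesis using that e by simp
qed

lemma del1_words: "x \<in> words n q \<Longrightarrow> y \<in> del1 x \<Longrightarrow> y \<in> words (n-1) q"
  using del1_len del1_set unfolding words_def by fastforce

lemma fin_del1: "finite (del1 x)" unfolding del1_img by simp

lemma sdc_fin: "sdc_code n q C \<Longrightarrow> finite C"
  unfolding sdc_code_def using words_fin finite_subset by blast

lemma sdc_sum:
  assumes "sdc_code n q C"
  shows "(\<Sum>x\<in>C. cw x) = (\<Sum>y\<in>\<Union>(del1 ` C). w y)"
  unfolding cw_def
  by (rule sum.UNION_disjoint[symmetric]) (use assms sdc_fin fin_del1 in \<open>auto simp: sdc_code_def\<close>)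

definition Aa :: "nat \<Rightarrow> nat \<Rightarrow> nat list set" where
  "Aa q a = (\<lambda>b. [a,b,a]) ` ({..<q} - {a})"

lemma Aa_mem: "y \<in> Aa q a \<longleftrightarrow> (\<exists>b. y = [a,b,a] \<and> b < q \<and> b \<noteq> a)"
  unfolding Aa_def by auto

lemma Aa_card: "a < q \<Longrightarrow> card (Aa q a) = q - 1"
  unfolding Aa_def by (subst card_image) (auto simp: inj_on_def)

lemma Aa_fin: "finite (Aa q a)" unfolding Aa_def by simp

lemma Aa_words: "a < q \<Longrightarrow> Aa q a \<subseteq> words 3 q"
  unfolding Aa_def words_def by auto

lemma parity:
  assumes sdc: "sdc_code 4 q C" and ev: "even q" and aq: "a < q"
  shows "(Aa q a - \<Union>(del1 ` C) \<noteq> {}) \<or> (\<exists>x\<in>C. \<not> abca x \<and> a \<in> Oa x)"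
proof (rule ccontr)
  assume "\<not> ?thesis"
  hence cov: "Aa q a \<subseteq> \<Union>(del1 ` C)" and ab: "\<forall>x\<in>C. a \<in> Oa x \<longrightarrow> abca x" by auto
  define Ca where "Ca = {x\<in>C. a \<in> Oa x}"
  have finC: "finite Ca" using sdc_fin[OF sdc] Ca_def by simp
  have Cw: "C \<subseteq> words 4 q" using sdc by (simp add: sdc_code_def)
  have key: "card (del1 x \<inter> Aa q a) = 2" if "x \<in> Ca" for x
  proof -
    have xC: "x \<in> C" and ax: "a \<in> Oa x" using that Ca_def by auto
    have xw: "x \<in> words 4 q" using Cw xC by auto
    obtain x0 x1 x2 x3 where xe: "x = [x0,x1,x2,x3]" "x0<q" "x1<q" "x2<q" "x3<q"
      using xw by (rule words4_obtain)
    have abc: "abca x" using ab xC ax by blast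
    hence d: "x0 = x3" "x0 \<noteq> x1" "x0 \<noteq> x2" "x1 \<noteq> x2" using xe by (auto simp: abca_def)
    have a0: "a = x0" using ax d unfolding xe Oa4 by auto
    have "del1 x \<inter> Aa q a = {[a,x1,a],[a,x2,a]}"
      unfolding xe del1_4 using d a0 xe by (auto simp: Aa_mem)
    thus ?thesis using d a0 by simp
  qed
  have un: "Aa q a = \<Union>((\<lambda>x. del1 x \<inter> Aa q a) ` Ca)"
  proof
    show "Aa q a \<subseteq> \<Union>((\<lambda>x. del1 x \<inter> Aa q a) ` Ca)"
    proof
      fix y assume y: "y \<in> Aa q a"
      then obtain x where x: "x \<in> C" "y \<in> del1 x" using cov by blast
      obtain b where "y = [a,b,a]" "b \<noteq> a" using y Aa_mem by blast
      hence "a \<in> Oa x" using x by (auto simp: Oa_def)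
      thus "y \<in> \<Union>((\<lambda>x. del1 x \<inter> Aa q a) ` Ca)" using x y Ca_def by auto
    qed
  qed auto
  have "card (Aa q a) = (\<Sum>x\<in>Ca. card (del1 x \<inter> Aa q a))"
    apply (subst un)
    apply (rule card_UN_disjoint)
    using finC fin_del1 apply auto[2]
    using sdc unfolding sdc_code_def Ca_def by blast
  also have "\<dots> = 2 * card Ca" using key by simp
  finally have "q - 1 = 2 * card Ca" using Aa_card[OF aq] by simp
  thus False using ev aq by presburger
qed

lemma Oa_sub: "Oa x \<subseteq> set x"
  unfolding Oa_def using del1_set by fastforce

theorem upper:
  assumes sdc: "sdc_code 4 q C" and ev: "even q"
  shows "real (card C) \<le> real q^3/4 + real q^2/2"
proof -
  define Cov where "Cov = \<Union>(del1 ` C)"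
  have Cw: "C \<subseteq> words 4 q" using sdc by (simp add: sdc_code_def)
  have finC: "finite C" using sdc_fin[OF sdc] .
  have Cov3: "Cov \<subseteq> words 3 q" unfolding Cov_def using Cw del1_words by fastforce
  have fin3: "finite (words 3 q)" by (rule words_fin)
  have s1: "(\<Sum>x\<in>C. cw x) = (\<Sum>y\<in>words 3 q. w y) - (\<Sum>y\<in>words 3 q - Cov. w y)"
    using sdc_sum[OF sdc] Cov3 fin3 by (simp add: Cov_def sum_diff)
  have s2: "real (card C) = (\<Sum>x\<in>C. cw x) - (\<Sum>x\<in>C. cw x - 1)"
    by (simp add: sum_subtractf)
  define C' where "C' = {x\<in>C. \<not> abca x}"
  have finC': "finite C'" using finC C'_def by simp
  have step1: "1/4 \<le> (\<Sum>y\<in>Aa q a - Cov. w y) + (\<Sum>x\<in>C'. (1/4) * of_bool (a \<in> Oa x))"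
    if aq: "a < q" for a
  proof -
    have nn1: "0 \<le> (\<Sum>y\<in>Aa q a - Cov. w y)" by (simp add: sum_nonneg w_nonneg)
    have nn2: "0 \<le> (\<Sum>x\<in>C'. (1/4::real) * of_bool (a \<in> Oa x))" by (simp add: sum_nonneg)
    from parity[OF sdc ev aq] show ?thesis
    proof
      assume "Aa q a - \<Union>(del1 ` C) \<noteq> {}"
      then obtain y where y: "y \<in> Aa q a - Cov" using Cov_def by auto
      have "w y = 1/4" using y by (auto simp: Aa_mem w_def)
      moreover have "w y \<le> (\<Sum>y\<in>Aa q a - Cov. w y)"
        by (rule member_le_sum) (use y Aa_fin w_nonneg in auto)
      ultimately show ?thesis using nn2 by linarith
    next
      assume "\<exists>x\<in>C. \<not> abca x \<and> a \<in> Oa x"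
      then obtain x where x: "x \<in> C'" "a \<in> Oa x" using C'_def by auto
      have "(1/4::real) * of_bool (a \<in> Oa x) \<le> (\<Sum>x\<in>C'. (1/4) * of_bool (a \<in> Oa x))"
        by (rule member_le_sum) (use x finC' in auto)
      thus ?thesis using x nn1 by simp
    qed
  qed
  have e1: "real q / 4 \<le> (\<Sum>a<q. (\<Sum>y\<in>Aa q a - Cov. w y) + (\<Sum>x\<in>C'. (1/4) * of_bool (a \<in> Oa x)))"
  proof -
    have "real q / 4 = (\<Sum>a<q. (1/4::real))" by simp
    also have "\<dots> \<le> (\<Sum>a<q. (\<Sum>y\<in>Aa q a - Cov. w y) + (\<Sum>x\<in>C'. (1/4) * of_bool (a \<in> Oa x)))"
      by (rule sum_mono) (use step1 in auto)
    finally show ?thesis .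
  qed
  have e2: "(\<Sum>a<q. (\<Sum>y\<in>Aa q a - Cov. w y) + (\<Sum>x\<in>C'. (1/4) * of_bool (a \<in> Oa x)))
     = (\<Sum>a<q. \<Sum>y\<in>Aa q a - Cov. w y) + (\<Sum>a<q. \<Sum>x\<in>C'. (1/4) * of_bool (a \<in> Oa x))"
    by (rule sum.distrib)
  have e3: "(\<Sum>a<q. \<Sum>y\<in>Aa q a - Cov. w y) = (\<Sum>y\<in>(\<Union>a\<in>{..<q}. Aa q a - Cov). w y)"
    by (rule sum.UNION_disjoint[symmetric]) (auto simp: Aa_fin Aa_mem)
  have e4: "(\<Sum>y\<in>(\<Union>a\<in>{..<q}. Aa q a - Cov). w y) \<le> (\<Sum>y\<in>words 3 q - Cov. w y)"
    by (rule sum_mono2) (use fin3 Aa_words w_nonneg in auto)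
  have e5: "(\<Sum>a<q. \<Sum>x\<in>C'. (1/4) * of_bool (a \<in> Oa x)) = (\<Sum>x\<in>C'. \<Sum>a<q. (1/4::real) * of_bool (a \<in> Oa x))"
    by (rule sum.swap)
  have e6: "(\<Sum>x\<in>C'. \<Sum>a<q. (1/4::real) * of_bool (a \<in> Oa x)) = (\<Sum>x\<in>C'. (1/4) * real (card ({..<q} \<inter> Oa x)))"
  proof (rule sum.cong[OF refl])
    fix x
    have "(\<Sum>a<q. (1/4::real) * of_bool (a \<in> Oa x)) = (1/4) * (\<Sum>a<q. of_bool (a \<in> Oa x))"
      by (rule sum_distrib_left[symmetric])
    moreover have "(\<Sum>a<q. of_bool (a \<in> Oa x)::real) = of_nat (card ({..<q} \<inter> {a. a \<in> Oa x}))"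
      by (rule sum_of_bool_eq) auto
    ultimately show "(\<Sum>a<q. (1/4::real) * of_bool (a \<in> Oa x)) = (1/4) * real (card ({..<q} \<inter> Oa x))"
      by simp
  qed
  have e7: "(\<Sum>x\<in>C'. (1/4) * real (card ({..<q} \<inter> Oa x))) \<le> (\<Sum>x\<in>C'. cw x - 1)"
  proof (rule sum_mono)
    fix x assume x: "x \<in> C'"
    have xw: "x \<in> words 4 q" using x C'_def Cw by auto
    obtain a b c d where xe: "x = [a,b,c,d]" "a<q" "b<q" "c<q" "d<q" using xw by (rule words4_obtain)
    have "card ({..<q} \<inter> Oa x) \<le> card (Oa x)"
      using Oa_sub[of x] by (intro card_mono) (auto intro: finite_subset)
    moreover have nab: "\<not> abca [a,b,c,d]" using x C'_def xe by simp
    have "real (card (Oa [a,b,c,d])) / 4 \<le> cw [a,b,c,d] - 1" by (rule Oa_bound[OF nab])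
    ultimately show "(1/4) * real (card ({..<q} \<inter> Oa x)) \<le> cw x - 1" using xe(1) by simp
  qed
  have e8: "(\<Sum>x\<in>C'. cw x - 1) \<le> (\<Sum>x\<in>C. cw x - 1)"
  proof (rule sum_mono2[OF finC])
    show "C' \<subseteq> C" using C'_def by auto
    fix x assume "x \<in> C - C'"
    hence xw: "x \<in> words 4 q" using Cw by auto
    obtain a b c d where xe: "x = [a,b,c,d]" "a<q" "b<q" "c<q" "d<q" using xw by (rule words4_obtain)
    show "0 \<le> cw x - 1" using cw_ge1[of a b c d] xe(1) by simp
  qed
  have W: "(\<Sum>y\<in>words 3 q. w y) = real q^3/4 + real q^2/2 + real q/4" by (rule Wtot)
  from e1 e2 e3 e4 e5 e6 e7 e8 s1 s2 W show ?thesis by linarith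
qed



definition pp :: "nat \<Rightarrow> nat" where "pp a = (if even a then Suc a else a - 1)"

lemma pp_div: "pp a div 2 = a div 2" unfolding pp_def by presburger
lemma pp_ne: "pp a \<noteq> a" unfolding pp_def by presburger
lemma pp_lt: "even q \<Longrightarrow> a < q \<Longrightarrow> pp a < q" unfolding pp_def by presburger
lemma same_div: "a div 2 = b div 2 \<Longrightarrow> a \<noteq> b \<Longrightarrow> b = pp a" unfolding pp_def by presburger

definition CWs :: "nat \<Rightarrow> nat \<Rightarrow> nat \<Rightarrow> nat \<Rightarrow> nat list set" where
 "CWs s0 s1 s2 s3 = (if even s0 \<and> s1 = Suc s0 then
   {[s0,s2,s3,s0],[s1,s2,s3,s1],[s2,s0,s1,s2],[s3,s0,s1,s3],[s0,s3,s2,s1],[s1,s3,s0,s2],[s2,s1,s0,s3],[s3,s1,s2,s0]}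
  else {[s0,s1,s2,s3],[s0,s3,s2,s1],[s1,s3,s0,s2],[s2,s1,s0,s3],[s3,s1,s2,s0],[s2,s3,s0,s1]})"

lemma disj_sp:
  assumes "s0 \<noteq> s1" "s0 \<noteq> s2" "s0 \<noteq> s3" "s1 \<noteq> s2" "s1 \<noteq> s3" "s2 \<noteq> s3"
   "x1 \<in> {[s0,s2,s3,s0],[s1,s2,s3,s1],[s2,s0,s1,s2],[s3,s0,s1,s3],[s0,s3,s2,s1],[s1,s3,s0,s2],[s2,s1,s0,s3],[s3,s1,s2,s0]}"
   "x2 \<in> {[s0,s2,s3,s0],[s1,s2,s3,s1],[s2,s0,s1,s2],[s3,s0,s1,s3],[s0,s3,s2,s1],[s1,s3,s0,s2],[s2,s1,s0,s3],[s3,s1,s2,s0]}"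
    "y \<in> del1 x1" "y \<in> del1 x2"
  shows "x1 = x2"
proof -
  note ne = assms(1-6) assms(1-6)[symmetric]
  show ?thesis using assms(7-10)
    by (simp only: insert_iff empty_iff) (elim disjE; auto simp: del1_4 ne)
qed

lemma disj_ns:
  assumes "s0 \<noteq> s1" "s0 \<noteq> s2" "s0 \<noteq> s3" "s1 \<noteq> s2" "s1 \<noteq> s3" "s2 \<noteq> s3"
   "x1 \<in> {[s0,s1,s2,s3],[s0,s3,s2,s1],[s1,s3,s0,s2],[s2,s1,s0,s3],[s3,s1,s2,s0],[s2,s3,s0,s1]}"
   "x2 \<in> {[s0,s1,s2,s3],[s0,s3,s2,s1],[s1,s3,s0,s2],[s2,s1,s0,s3],[s3,s1,s2,s0],[s2,s3,s0,s1]}"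
    "y \<in> del1 x1" "y \<in> del1 x2"
  shows "x1 = x2"
proof -
  note ne = assms(1-6) assms(1-6)[symmetric]
  show ?thesis using assms(7-10)
    by (simp only: insert_iff empty_iff) (elim disjE; auto simp: del1_4 ne)
qed

lemma cov3_sp:
  assumes "s0 \<noteq> s1" "s0 \<noteq> s2" "s0 \<noteq> s3" "s1 \<noteq> s2" "s1 \<noteq> s3" "s2 \<noteq> s3"
    "a \<in> {s0,s1,s2,s3}" "b \<in> {s0,s1,s2,s3}" "c \<in> {s0,s1,s2,s3}" "a \<noteq> b" "b \<noteq> c" "a \<noteq> c"
  shows "\<exists>x\<in>{[s0,s2,s3,s0],[s1,s2,s3,s1],[s2,s0,s1,s2],[s3,s0,s1,s3],[s0,s3,s2,s1],[s1,s3,s0,s2],[s2,s1,s0,s3],[s3,s1,s2,s0]}. [a,b,c] \<in> del1 x"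
proof -
  note ne = assms(1-6) assms(1-6)[symmetric]
  show ?thesis using assms(7-12)
    by (simp only: insert_iff empty_iff) (elim disjE; simp add: del1_4 ne)
qed

lemma aba_sp:
  assumes "s0 \<noteq> s1" "s0 \<noteq> s2" "s0 \<noteq> s3" "s1 \<noteq> s2" "s1 \<noteq> s3" "s2 \<noteq> s3"
    "x \<in> {[s0,s2,s3,s0],[s1,s2,s3,s1],[s2,s0,s1,s2],[s3,s0,s1,s3],[s0,s3,s2,s1],[s1,s3,s0,s2],[s2,s1,s0,s3],[s3,s1,s2,s0]}" "[a,b,a] \<in> del1 x"
  shows "(a \<in> {s0,s1} \<and> b \<in> {s2,s3}) \<or> (a \<in> {s2,s3} \<and> b \<in> {s0,s1})"
proof -
  note ne = assms(1-6) assms(1-6)[symmetric]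
  show ?thesis using assms(7-8)
    by (simp only: insert_iff empty_iff) (elim disjE; auto simp: del1_4 ne)
qed

lemma cov3_ns:
  assumes "s0 \<noteq> s1" "s0 \<noteq> s2" "s0 \<noteq> s3" "s1 \<noteq> s2" "s1 \<noteq> s3" "s2 \<noteq> s3"
    "a \<in> {s0,s1,s2,s3}" "b \<in> {s0,s1,s2,s3}" "c \<in> {s0,s1,s2,s3}" "a \<noteq> b" "b \<noteq> c" "a \<noteq> c"
  shows "\<exists>x\<in>{[s0,s1,s2,s3],[s0,s3,s2,s1],[s1,s3,s0,s2],[s2,s1,s0,s3],[s3,s1,s2,s0],[s2,s3,s0,s1]}. [a,b,c] \<in> del1 x"
proof -
  note ne = assms(1-6) assms(1-6)[symmetric]
  show ?thesis using assms(7-12)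
    by (simp only: insert_iff empty_iff) (elim disjE; simp add: del1_4 ne)
qed

lemma aba_ns:
  assumes "s0 \<noteq> s1" "s0 \<noteq> s2" "s0 \<noteq> s3" "s1 \<noteq> s2" "s1 \<noteq> s3" "s2 \<noteq> s3"
    "x \<in> {[s0,s1,s2,s3],[s0,s3,s2,s1],[s1,s3,s0,s2],[s2,s1,s0,s3],[s3,s1,s2,s0],[s2,s3,s0,s1]}" "[a,b,a] \<in> del1 x"
  shows "False"
proof -
  note ne = assms(1-6) assms(1-6)[symmetric]
  show ?thesis using assms(7-8)
    by (simp only: insert_iff empty_iff) (elim disjE; auto simp: del1_4 ne)
qed

lemma covaba_sp:
  assumes "s0 \<noteq> s1" "s0 \<noteq> s2" "s0 \<noteq> s3" "s1 \<noteq> s2" "s1 \<noteq> s3" "s2 \<noteq> s3"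
    "(a \<in> {s0,s1} \<and> b \<in> {s2,s3}) \<or> (a \<in> {s2,s3} \<and> b \<in> {s0,s1})"
  shows "\<exists>x\<in>{[s0,s2,s3,s0],[s1,s2,s3,s1],[s2,s0,s1,s2],[s3,s0,s1,s3],[s0,s3,s2,s1],[s1,s3,s0,s2],[s2,s1,s0,s3],[s3,s1,s2,s0]}. [a,b,a] \<in> del1 x"
proof -
  note ne = assms(1-6) assms(1-6)[symmetric]
  show ?thesis using assms(7)
    by (simp only: insert_iff empty_iff) (elim disjE conjE; simp add: del1_4 ne)
qed

definition good :: "nat list \<Rightarrow> bool" where
  "good x \<longleftrightarrow> length x = 4 \<and> x!0 \<noteq> x!1 \<and> x!1 \<noteq> x!2 \<and> x!2 \<noteq> x!3 \<and> x!0 \<noteq> x!2 \<and> x!1 \<noteq> x!3"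

lemma CWs_good:
  assumes "s0 < s1" "s1 < s2" "s2 < s3" "x \<in> CWs s0 s1 s2 s3"
  shows "good x \<and> set x \<subseteq> {s0,s1,s2,s3}"
  using assms unfolding CWs_def good_def by (auto split: if_splits)

lemma good_del: "good x \<Longrightarrow> y \<in> del1 x \<Longrightarrow> y!0 \<noteq> y!1 \<and> y!1 \<noteq> y!2"
  unfolding good_def by (subst (asm) len4[of x]) (auto simp: del1_4)

lemma good_cw: "good x \<Longrightarrow> cw x \<le> 1"
proof -
  assume g: "good x"
  have e: "x = [x!0,x!1,x!2,x!3]" using g len4 good_def by blast
  have "\<And>y. y \<in> del1 x \<Longrightarrow> w y = 1/4" using good_del[OF g] by (simp add: w_def)
  hence "cw x \<le> real (card (del1 x)) * (1/4)" unfolding cw_def by (intro sum_bounded_above) simp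
  moreover have "card (del1 x) \<le> 4"
  proof -
    have "del1 x = set [[x!1,x!2,x!3],[x!0,x!2,x!3],[x!0,x!1,x!3],[x!0,x!1,x!2]]"
      by (subst e) (simp add: del1_4)
    thus ?thesis using card_length[of "[[x!1,x!2,x!3],[x!0,x!2,x!3],[x!0,x!1,x!3],[x!0,x!1,x!2]]"] by simp
  qed
  ultimately show ?thesis by simp
qed


lemma CWs_sp_eq: "even s0 \<and> s1 = Suc s0 \<Longrightarrow> CWs s0 s1 s2 s3 =
   {[s0,s2,s3,s0],[s1,s2,s3,s1],[s2,s0,s1,s2],[s3,s0,s1,s3],[s0,s3,s2,s1],[s1,s3,s0,s2],[s2,s1,s0,s3],[s3,s1,s2,s0]}"
  unfolding CWs_def by simp

lemma CWs_ns_eq: "\<not> (even s0 \<and> s1 = Suc s0) \<Longrightarrow> CWs s0 s1 s2 s3 =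
   {[s0,s1,s2,s3],[s0,s3,s2,s1],[s1,s3,s0,s2],[s2,s1,s0,s3],[s3,s1,s2,s0],[s2,s3,s0,s1]}"
  unfolding CWs_def by (simp only: if_False)

lemma CWs_disj:
  assumes "s0 < s1" "s1 < s2" "s2 < s3" "x1 \<in> CWs s0 s1 s2 s3" "x2 \<in> CWs s0 s1 s2 s3"
    "y \<in> del1 x1" "y \<in> del1 x2"
  shows "x1 = x2"
proof (cases "even s0 \<and> s1 = Suc s0")
  case True
  show ?thesis by (rule disj_sp) (use assms CWs_sp_eq[OF True] in auto)
next
  case False
  show ?thesis by (rule disj_ns) (use assms CWs_ns_eq[OF False] in auto)
qed

lemma CWs_cov3:
  assumes "s0 < s1" "s1 < s2" "s2 < s3" "a \<in> {s0,s1,s2,s3}" "b \<in> {s0,s1,s2,s3}" "c \<in> {s0,s1,s2,s3}"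
    "a \<noteq> b" "b \<noteq> c" "a \<noteq> c"
  shows "\<exists>x\<in>CWs s0 s1 s2 s3. [a,b,c] \<in> del1 x"
proof (cases "even s0 \<and> s1 = Suc s0")
  case True
  show ?thesis unfolding CWs_sp_eq[OF True] by (rule cov3_sp) (use assms in auto)
next
  case False
  show ?thesis unfolding CWs_ns_eq[OF False] by (rule cov3_ns) (use assms in auto)
qed

lemma CWs_covaba:
  assumes "s0 < s1" "s1 < s2" "s2 < s3" "even s0" "s1 = Suc s0"
    "(a \<in> {s0,s1} \<and> b \<in> {s2,s3}) \<or> (a \<in> {s2,s3} \<and> b \<in> {s0,s1})"
  shows "\<exists>x\<in>CWs s0 s1 s2 s3. [a,b,a] \<in> del1 x"
  unfolding CWs_sp_eq[OF conjI[OF assms(4,5)]] by (rule covaba_sp) (use assms in auto)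

lemma CWs_aba:
  assumes "s0 < s1" "s1 < s2" "s2 < s3" "x \<in> CWs s0 s1 s2 s3" "[a,b,a] \<in> del1 x"
  shows "even s0 \<and> s1 = Suc s0 \<and> ((a \<in> {s0,s1} \<and> b \<in> {s2,s3}) \<or> (a \<in> {s2,s3} \<and> b \<in> {s0,s1}))"
proof (cases "even s0 \<and> s1 = Suc s0")
  case True
  have "(a \<in> {s0,s1} \<and> b \<in> {s2,s3}) \<or> (a \<in> {s2,s3} \<and> b \<in> {s0,s1})"
    by (rule aba_sp) (use assms CWs_sp_eq[OF True] in auto)
  thus ?thesis using True by blast
next
  case False
  have False by (rule aba_ns) (use assms CWs_ns_eq[OF False] in auto)
  thus ?thesis ..
qed

lemma sorted4:
  assumes "finite Q" "card Q = 4"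
  obtains s0 s1 s2 s3 where "sorted_list_of_set Q = [s0,s1,s2,s3]" "s0 < s1" "s1 < s2" "s2 < s3"
    "Q = {s0,s1,s2,s3}"
proof -
  define s where "s = sorted_list_of_set Q"
  have l: "length s = 4" using assms s_def by simp
  have st: "sorted_wrt (<) s" using s_def strict_sorted_list_of_set by blast
  have se: "set s = Q" using s_def assms by simp
  have e: "s = [s!0,s!1,s!2,s!3]" using len4[OF l] .
  have "sorted_wrt (<) [s!0,s!1,s!2,s!3]" using st e by simp
  hence "s!0 < s!1" "s!1 < s!2" "s!2 < s!3" by auto
  moreover have "Q = {s!0,s!1,s!2,s!3}" using se e by (metis list.set(1) list.set(2))
  ultimately show ?thesis using that e s_def by metis
qed



definition CWQ :: "nat set \<Rightarrow> nat list set" where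
 "CWQ Q = (let s = sorted_list_of_set Q in CWs (s!0) (s!1) (s!2) (s!3))"

definition code :: "nat \<Rightarrow> nat set set \<Rightarrow> nat list set" where
 "code q S = {[a,a,a,a] | a. a<q} \<union> {[a,a,b,b] | a b. a<q \<and> b<q \<and> a\<noteq>b} \<union> (\<Union>Q\<in>S. CWQ Q)"

lemma SQS_Q: "SQS q S \<Longrightarrow> Q \<in> S \<Longrightarrow> Q \<subseteq> {..<q} \<and> card Q = 4 \<and> finite Q"
  unfolding SQS_def by (metis card.infinite zero_neq_numeral)

lemma SQS_uniq:
  assumes "SQS q S" "Q1 \<in> S" "Q2 \<in> S" "T \<subseteq> Q1" "T \<subseteq> Q2" "card T = 3"
  shows "Q1 = Q2"
proof -
  have "T \<subseteq> {..<q}" using SQS_Q[OF assms(1,2)] assms(4) by blast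
  hence "\<exists>!Q. Q \<in> S \<and> T \<subseteq> Q" using assms(1,6) unfolding SQS_def by blast
  thus ?thesis using assms by blast
qed

lemma SQS_ex:
  assumes "SQS q S" "T \<subseteq> {..<q}" "card T = 3"
  obtains Q where "Q \<in> S" "T \<subseteq> Q"
  using assms unfolding SQS_def by blast

lemma CWQ_eq:
  assumes "SQS q S" "Q \<in> S"
  obtains s0 s1 s2 s3 where "s0 < s1" "s1 < s2" "s2 < s3" "Q = {s0,s1,s2,s3}"
    "CWQ Q = CWs s0 s1 s2 s3"
proof -
  have f: "finite Q" "card Q = 4" using SQS_Q[OF assms] by auto
  obtain s0 s1 s2 s3 where "sorted_list_of_set Q = [s0,s1,s2,s3]" "s0 < s1" "s1 < s2" "s2 < s3"
    "Q = {s0,s1,s2,s3}" using sorted4[OF f] .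
  thus ?thesis using that unfolding CWQ_def by simp
qed

lemma CWQ_good:
  assumes "SQS q S" "Q \<in> S" "x \<in> CWQ Q"
  shows "good x \<and> set x \<subseteq> Q"
proof -
  obtain s0 s1 s2 s3 where "s0 < s1" "s1 < s2" "s2 < s3" "Q = {s0,s1,s2,s3}"
    "CWQ Q = CWs s0 s1 s2 s3" using CWQ_eq[OF assms(1,2)] .
  thus ?thesis using CWs_good assms(3) by metis
qed

lemma step_sp:
  assumes st: "step_property q S id" and sqs: "SQS q S" and QS: "Q \<in> S"
    and Qe: "Q = {s0,s1,s2,s3}" and o: "s0 < s1" "s1 < s2" "s2 < s3"
    and m: "2*t \<in> Q" "Suc (2*t) \<in> Q" "h \<in> Q" "h > Suc (2*t)"
  shows "s0 = 2*t \<and> s1 = Suc (2*t)"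
proof -
  have Qq: "Q \<subseteq> {..<q}" using SQS_Q[OF sqs QS] by blast
  have tq: "t < q div 2" using m(2) Qq by auto
  have lt: "s0 < q" "s1 < q" "s2 < q" "s3 < q" using Qq Qe by auto
  have c1: "2*t = s0 \<or> 2*t = s1 \<or> 2*t = s2 \<or> 2*t = s3" using m(1) Qe by auto
  have c2: "Suc (2*t) = s0 \<or> Suc (2*t) = s1 \<or> Suc (2*t) = s2 \<or> Suc (2*t) = s3" using m(2) Qe by auto
  have c3: "h = s0 \<or> h = s1 \<or> h = s2 \<or> h = s3" using m(3) Qe by auto
  have no: False if "2*t = s1" "Suc (2*t) = s2"
  proof -
    have "Q = {id (2*t), id (2*t+1), id s0, id s3}" using Qe that by auto
    hence "(s0 < 2*t \<and> s3 < 2*t) \<or> (s0 > 2*t+1 \<and> s3 > 2*t+1)"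
      using st tq QS lt unfolding step_property_def by blast
    thus False using that o by linarith
  qed
  have nn: "\<not> (2*t = s1 \<and> Suc (2*t) = s2)" using no by blast
  show ?thesis using c1 c2 c3 o m(4) nn by (elim disjE; auto)
qed

definition Kset :: "nat \<Rightarrow> nat \<Rightarrow> nat set" where
  "Kset a b = (if a div 2 < b div 2 then {a, pp a, b} else {b, pp b, a})"

lemma Kcard: "a div 2 \<noteq> b div 2 \<Longrightarrow> card (Kset a b) = 3"
  unfolding Kset_def using pp_div pp_ne by (auto simp: card_insert_if) (metis pp_div)+

lemma Kin:
  assumes "s0 < s1" "s1 < s2" "s2 < s3" "even s0" "s1 = Suc s0"
    "(a \<in> {s0,s1} \<and> b \<in> {s2,s3}) \<or> (a \<in> {s2,s3} \<and> b \<in> {s0,s1})"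
  shows "Kset a b \<subseteq> {s0,s1,s2,s3} \<and> a div 2 \<noteq> b div 2"
proof -
  have d: "s0 div 2 = s1 div 2" "s0 div 2 < s2 div 2" "s0 div 2 < s3 div 2" using assms(1-5) by presburger+
  have p: "pp s0 = s1" "pp s1 = s0" using assms(4,5) unfolding pp_def by auto
  show ?thesis using assms(6) d p unfolding Kset_def by auto
qed

lemma pair_eq: "{2*(a div 2), Suc (2*(a div 2))} = {a, pp a}"
proof (cases "even a")
  case True
  hence "2*(a div 2) = a" by simp
  thus ?thesis using True by (simp add: pp_def)
next
  case False
  hence "2*(a div 2) = a - 1" "Suc (2*(a div 2)) = a" by presburger+
  thus ?thesis using False by (auto simp: pp_def)
qed



definition AB :: "nat \<Rightarrow> nat list set" where
  "AB q = {[a,a,a,a] | a. a<q} \<union> {[a,a,b,b] | a b. a<q \<and> b<q \<and> a\<noteq>b}"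

lemma code_AB: "code q S = AB q \<union> (\<Union>Q\<in>S. CWQ Q)"
  unfolding code_def AB_def by blast

lemma AB_words: "AB q \<subseteq> words 4 q"
  unfolding AB_def words_def by auto

lemma AB_del: "x \<in> AB q \<Longrightarrow> y \<in> del1 x \<Longrightarrow> y!0 = y!1 \<or> y!1 = y!2"
  unfolding AB_def by (auto simp: del1_4)

lemma AB_disj: "x1 \<in> AB q \<Longrightarrow> x2 \<in> AB q \<Longrightarrow> y \<in> del1 x1 \<Longrightarrow> y \<in> del1 x2 \<Longrightarrow> x1 = x2"
  unfolding AB_def by (auto simp: del1_4)

lemma AB_cw: "x \<in> AB q \<Longrightarrow> cw x \<le> 1"
  unfolding AB_def by (auto simp: cw4 w_def)

lemma CW_words: "SQS q S \<Longrightarrow> Q \<in> S \<Longrightarrow> x \<in> CWQ Q \<Longrightarrow> x \<in> words 4 q"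
  using CWQ_good[of q S Q x] SQS_Q[of q S Q] unfolding words_def good_def by blast

lemma CW_disj:
  assumes sqs: "SQS q S" and Q: "Q1 \<in> S" "Q2 \<in> S" and x: "x1 \<in> CWQ Q1" "x2 \<in> CWQ Q2"
    and y: "y \<in> del1 x1" "y \<in> del1 x2"
  shows "x1 = x2"
proof -
  obtain s0 s1 s2 s3 where s: "s0 < s1" "s1 < s2" "s2 < s3" "Q1 = {s0,s1,s2,s3}"
    "CWQ Q1 = CWs s0 s1 s2 s3" using CWQ_eq[OF sqs Q(1)] .
  obtain t0 t1 t2 t3 where t: "t0 < t1" "t1 < t2" "t2 < t3" "Q2 = {t0,t1,t2,t3}"
    "CWQ Q2 = CWs t0 t1 t2 t3" using CWQ_eq[OF sqs Q(2)] .
  have g1: "good x1 \<and> set x1 \<subseteq> Q1" using CWQ_good[OF sqs Q(1) x(1)] .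
  have g2: "good x2 \<and> set x2 \<subseteq> Q2" using CWQ_good[OF sqs Q(2) x(2)] .
  have ly: "length y = 3" using del1_len[OF y(1)] g1 by (simp add: good_def)
  have ye: "y = [y!0,y!1,y!2]" using len3[OF ly] .
  have ne: "y!0 \<noteq> y!1" "y!1 \<noteq> y!2" using good_del[OF _ y(1)] g1 by auto
  have sy1: "set y \<subseteq> Q1" using del1_set[OF y(1)] g1 by blast
  have sy2: "set y \<subseteq> Q2" using del1_set[OF y(2)] g2 by blast
  have QQ: "Q1 = Q2"
  proof (cases "y!0 = y!2")
    case False
    have "card (set y) = 3" using ne False by (subst ye) simp
    thus ?thesis using SQS_uniq[OF sqs Q sy1 sy2] by blast
  next
    case True
    hence y1: "[y!0,y!1,y!0] \<in> del1 x1" and y2: "[y!0,y!1,y!0] \<in> del1 x2"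
      using y ye by (metis)+
    have a1: "even s0 \<and> s1 = Suc s0 \<and> ((y!0 \<in> {s0,s1} \<and> y!1 \<in> {s2,s3}) \<or> (y!0 \<in> {s2,s3} \<and> y!1 \<in> {s0,s1}))"
      using CWs_aba[OF s(1-3) _ y1] x(1) s(5) by blast
    have a2: "even t0 \<and> t1 = Suc t0 \<and> ((y!0 \<in> {t0,t1} \<and> y!1 \<in> {t2,t3}) \<or> (y!0 \<in> {t2,t3} \<and> y!1 \<in> {t0,t1}))"
      using CWs_aba[OF t(1-3) _ y2] x(2) t(5) by blast
    have k1: "Kset (y!0) (y!1) \<subseteq> Q1 \<and> y!0 div 2 \<noteq> y!1 div 2"
      using Kin[OF s(1-3)] a1 s(4) by blast
    have k2: "Kset (y!0) (y!1) \<subseteq> Q2" using Kin[OF t(1-3)] a2 t(4) by blast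
    have "card (Kset (y!0) (y!1)) = 3" using Kcard k1 by blast
    thus ?thesis using SQS_uniq[OF sqs Q _ k2] k1 by blast
  qed
  show ?thesis using CWs_disj[OF s(1-3)] x s(5) t(5) QQ y by (metis)
qed

lemma code_sdc:
  assumes sqs: "SQS q S"
  shows "sdc_code 4 q (code q S)"
  unfolding sdc_code_def
proof (intro conjI ballI impI)
  show "code q S \<subseteq> words 4 q" unfolding code_AB using AB_words CW_words[OF sqs] by blast
next
  fix x1 x2 assume x: "x1 \<in> code q S" "x2 \<in> code q S" "x1 \<noteq> x2"
  show "del1 x1 \<inter> del1 x2 = {}"
  proof (rule ccontr)
    assume "del1 x1 \<inter> del1 x2 \<noteq> {}"
    then obtain y where y: "y \<in> del1 x1" "y \<in> del1 x2" by blast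
    have gd: "\<not> (y!0 = y!1 \<or> y!1 = y!2)" if "x \<in> CWQ Q" "Q \<in> S" "y \<in> del1 x" for x Q
      using good_del[of x y] CWQ_good[OF sqs that(2,1)] that(3) by blast
    show False
      using x y AB_disj[of x1 q x2 y] AB_del[of x1 q y] AB_del[of x2 q y] gd[of x1] gd[of x2]
        CW_disj[OF sqs, of _ _ x1 x2 y] unfolding code_AB by blast
  qed
qed



definition Pw :: "nat \<Rightarrow> nat list set" where "Pw q = (\<lambda>a. [a, pp a, a]) ` {..<q}"

lemma code_cover:
  assumes ev: "even q" and sqs: "SQS q S" and st: "step_property q S id"
    and y: "y \<in> words 3 q" "y \<notin> Pw q"
  shows "\<exists>x\<in>code q S. y \<in> del1 x"
proof -
  have l: "length y = 3" and sy: "set y \<subseteq> {..<q}" using y(1) by (auto simp: words_def)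
  define a b c where "a = y!0" "b = y!1" "c = y!2"
  have ye: "y = [a,b,c]" using len3[OF l] a_b_c_def by simp
  have abc: "a < q" "b < q" "c < q" using sy ye by auto
  have CWsub: "CWQ Q \<subseteq> code q S" if "Q \<in> S" for Q using that unfolding code_def by blast
  show ?thesis
  proof (cases "a = b")
    case True
    show ?thesis
    proof (cases "b = c")
      case True
      have "[a,a,a,a] \<in> code q S" using abc unfolding code_def by blast
      thus ?thesis using ye True \<open>a = b\<close> by (intro bexI[of _ "[a,a,a,a]"]) (auto simp: del1_4)
    next
      case False
      have "[a,a,c,c] \<in> code q S" using abc False \<open>a = b\<close> unfolding code_def by blast
      thus ?thesis using ye \<open>a = b\<close> by (intro bexI[of _ "[a,a,c,c]"]) (auto simp: del1_4)
    qed
  next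
    case anb: False
    show ?thesis
    proof (cases "b = c")
      case True
      have "[a,a,b,b] \<in> code q S" using abc anb unfolding code_def by blast
      thus ?thesis using ye True by (intro bexI[of _ "[a,a,b,b]"]) (auto simp: del1_4)
    next
      case bnc: False
      show ?thesis
      proof (cases "a = c")
        case False
        have T3: "card {a,b,c} = 3" using anb bnc False by simp
        have Tq: "{a,b,c} \<subseteq> {..<q}" using abc by auto
        obtain Q where Q: "Q \<in> S" "{a,b,c} \<subseteq> Q" using SQS_ex[OF sqs Tq T3] by blast
        obtain s0 s1 s2 s3 where s: "s0 < s1" "s1 < s2" "s2 < s3" "Q = {s0,s1,s2,s3}"
          "CWQ Q = CWs s0 s1 s2 s3" using CWQ_eq[OF sqs Q(1)] .
        have "\<exists>x\<in>CWs s0 s1 s2 s3. [a,b,c] \<in> del1 x"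
          by (rule CWs_cov3[OF s(1-3)]) (use Q(2) s(4) anb bnc False in auto)
        thus ?thesis using CWsub[OF Q(1)] s(5) ye by blast
      next
        case True
        have bpa: "b \<noteq> pp a" using y(2) ye True abc unfolding Pw_def by blast
        have dv: "a div 2 \<noteq> b div 2" using same_div[of a b] anb bpa by auto
        define lo hi where "lo = (if a div 2 < b div 2 then a else b)"
          and "hi = (if a div 2 < b div 2 then b else a)"
        have K: "Kset a b = {lo, pp lo, hi}" unfolding Kset_def lo_def hi_def by auto
        have lohi: "lo div 2 < hi div 2" using dv unfolding lo_def hi_def by auto
        have lq: "lo < q" "hi < q" using abc lo_def hi_def by auto
        have Kq: "Kset a b \<subseteq> {..<q}" using K lq pp_lt[OF ev lq(1)] by auto
        obtain Q where Q: "Q \<in> S" "Kset a b \<subseteq> Q" using SQS_ex[OF sqs Kq Kcard[OF dv]] by blast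
        obtain s0 s1 s2 s3 where s: "s0 < s1" "s1 < s2" "s2 < s3" "Q = {s0,s1,s2,s3}"
          "CWQ Q = CWs s0 s1 s2 s3" using CWQ_eq[OF sqs Q(1)] .
        define t where "t = lo div 2"
        have pe: "{2*t, Suc (2*t)} = {lo, pp lo}" using pair_eq t_def by simp
        have inQ: "2*t \<in> Q" "Suc (2*t) \<in> Q" "hi \<in> Q" using pe Q(2) K by auto
        have hig: "hi > Suc (2*t)" using lohi t_def by linarith
        have ss: "s0 = 2*t \<and> s1 = Suc (2*t)"
          by (rule step_sp[OF st sqs Q(1) s(4) s(1-3) inQ hig])
        have lo01: "lo \<in> {s0,s1}" using pe ss by auto
        have hi23: "hi \<in> {s2,s3}" using inQ(3) s(4) ss hig by auto
        have str: "(a \<in> {s0,s1} \<and> b \<in> {s2,s3}) \<or> (a \<in> {s2,s3} \<and> b \<in> {s0,s1})"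
          using lo01 hi23 unfolding lo_def hi_def by (auto split: if_splits)
        have "\<exists>x\<in>CWs s0 s1 s2 s3. [a,b,a] \<in> del1 x"
          by (rule CWs_covaba[OF s(1-3) _ _ str]) (use ss in auto)
        thus ?thesis using CWsub[OF Q(1)] s(5) ye True by blast
      qed
    qed
  qed
qed

lemma code_cw: "SQS q S \<Longrightarrow> x \<in> code q S \<Longrightarrow> cw x \<le> 1"
  unfolding code_AB using AB_cw good_cw CWQ_good by blast

lemma Pw_sum: "even q \<Longrightarrow> (\<Sum>y\<in>Pw q. w y) = real q / 4"
proof -
  assume ev: "even q"
  have inj: "inj_on (\<lambda>a. [a, pp a, a]) {..<q}" by (auto simp: inj_on_def)
  have "(\<Sum>y\<in>Pw q. w y) = (\<Sum>a<q. w [a, pp a, a])"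
    unfolding Pw_def by (subst sum.reindex[OF inj]) simp
  also have "\<dots> = (\<Sum>a<q. (1/4::real))"
    using pp_ne by (intro sum.cong) (auto simp: w_def, metis pp_ne)
  finally show ?thesis by simp
qed

lemma Pw_words: "even q \<Longrightarrow> Pw q \<subseteq> words 3 q"
  unfolding Pw_def words_def using pp_lt by auto

lemma code_card:
  assumes ev: "even q" and sqs: "SQS q S" and st: "step_property q S id"
  shows "real q^3/4 + real q^2/2 \<le> real (card (code q S))"
proof -
  define C where "C = code q S"
  have sdc: "sdc_code 4 q C" using code_sdc[OF sqs] C_def by simp
  have finC: "finite C" using sdc_fin[OF sdc] .
  have Cw: "C \<subseteq> words 4 q" using sdc by (simp add: sdc_code_def)
  define Cov where "Cov = \<Union>(del1 ` C)"
  have Cov3: "Cov \<subseteq> words 3 q" unfolding Cov_def using Cw del1_words by fastforce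
  have finCov: "finite Cov" using Cov3 words_fin finite_subset by blast
  have sub: "words 3 q - Pw q \<subseteq> Cov" using code_cover[OF ev sqs st] unfolding Cov_def C_def by blast
  have "real q^3/4 + real q^2/2 = (\<Sum>y\<in>words 3 q. w y) - (\<Sum>y\<in>Pw q. w y)"
    using Wtot[of q] Pw_sum[OF ev] by simp
  also have "\<dots> = (\<Sum>y\<in>words 3 q - Pw q. w y)"
    using Pw_words[OF ev] words_fin by (simp add: sum_diff)
  also have "\<dots> \<le> (\<Sum>y\<in>Cov. w y)"
    by (rule sum_mono2[OF finCov sub]) (simp add: w_nonneg)
  also have "\<dots> = (\<Sum>x\<in>C. cw x)" using sdc_sum[OF sdc] Cov_def by simp
  also have "\<dots> \<le> (\<Sum>x\<in>C. 1)" by (rule sum_mono) (use code_cw[OF sqs] C_def in auto)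
  also have "\<dots> = real (card C)" by simp
  finally show ?thesis using C_def by simp
qed



lemma transport:
  assumes sqs: "SQS q S" and bij: "bij_betw L {..<q} {..<q}" and st: "step_property q S L"
  shows "\<exists>S'. SQS q S' \<and> step_property q S' id"
proof -
  define R where "R = the_inv_into {..<q} L"
  have injL: "inj_on L {..<q}" using bij bij_betw_def by blast
  have LR: "L (R x) = x" if "x < q" for x
    using that bij unfolding R_def by (simp add: f_the_inv_into_f_bij_betw)
  have RL: "R (L x) = x" if "x < q" for x
    using that injL unfolding R_def by (simp add: the_inv_into_f_f)
  have bijR: "bij_betw R {..<q} {..<q}" using bij unfolding R_def by (rule bij_betw_the_inv_into)
  have injR: "inj_on R {..<q}" using bijR bij_betw_def by blast
  have Rq: "R x < q" if "x < q" for x using bijR that bij_betw_apply by fastforce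
  have Lq: "L x < q" if "x < q" for x using bij that bij_betw_apply by fastforce
  have LRset: "L ` (R ` Q) = Q" if "Q \<subseteq> {..<q}" for Q
    using that LR by (force simp: image_image)
  have RLset: "R ` (L ` T) = T" if "T \<subseteq> {..<q}" for T
    using that RL by (force simp: image_image)
  define S' where "S' = (\<lambda>Q. R ` Q) ` S"
  have sqs': "SQS q S'"
    unfolding SQS_def
  proof (intro conjI allI impI ballI)
    fix Q' assume "Q' \<in> S'"
    then obtain Q where Q: "Q \<in> S" "Q' = R ` Q" using S'_def by blast
    have Qq: "Q \<subseteq> {..<q}" "card Q = 4" using SQS_Q[OF sqs Q(1)] by auto
    show "Q' \<subseteq> {..<q}" using Q(2) Qq Rq by auto
    show "card Q' = 4" using Q(2) Qq card_image inj_on_subset[OF injR Qq(1)] by metis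
  next
    fix T assume T: "T \<subseteq> {..<q} \<and> card T = 3"
    have LT: "L ` T \<subseteq> {..<q}" using T Lq by auto
    have cLT: "card (L ` T) = 3" using T card_image inj_on_subset[OF injL] by metis
    obtain Q where Q: "Q \<in> S" "L ` T \<subseteq> Q" using SQS_ex[OF sqs LT cLT] by blast
    have Qq: "Q \<subseteq> {..<q}" using SQS_Q[OF sqs Q(1)] by auto
    have ex: "R ` Q \<in> S' \<and> T \<subseteq> R ` Q"
      using Q S'_def RLset[of T] T by (metis image_mono image_eqI)
    show "\<exists>!Q'. Q' \<in> S' \<and> T \<subseteq> Q'"
    proof (rule ex1I[of _ "R ` Q"])
      show "R ` Q \<in> S' \<and> T \<subseteq> R ` Q" using ex .
    next
      fix Q2' assume "Q2' \<in> S' \<and> T \<subseteq> Q2'"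
      then obtain Q2 where Q2: "Q2 \<in> S" "Q2' = R ` Q2" "T \<subseteq> R ` Q2" using S'_def by blast
      have Q2q: "Q2 \<subseteq> {..<q}" using SQS_Q[OF sqs Q2(1)] by auto
      have "L ` T \<subseteq> Q2" using Q2(3) LRset[OF Q2q] by (metis image_mono)
      hence "Q2 = Q" using SQS_uniq[OF sqs Q2(1) Q(1) _ Q(2) cLT] by blast
      thus "Q2' = R ` Q" using Q2(2) by simp
    qed
  qed
  have st': "step_property q S' id"
    unfolding step_property_def
  proof (intro allI impI ballI)
    fix t Q' a b assume t: "t < q div 2" and Q': "Q' \<in> S'" and ab: "a < q" "b < q"
      and e: "Q' = {id (2*t), id (2*t+1), id a, id b}"
    obtain Q where Q: "Q \<in> S" "Q' = R ` Q" using Q' S'_def by blast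
    have Qq: "Q \<subseteq> {..<q}" using SQS_Q[OF sqs Q(1)] by auto
    have "Q = L ` Q'" using LRset[OF Qq] Q(2) by simp
    hence "Q = {L (2*t), L (2*t+1), L a, L b}" using e by simp
    thus "(a < 2*t \<and> b < 2*t) \<or> (a > 2*t+1 \<and> b > 2*t+1)"
      using st Q(1) t ab unfolding step_property_def by blast
  qed
  show ?thesis using sqs' st' by blast
qed

theorem theorem3p1:
  fixes q :: nat
  assumes "q \<ge> 4" and "even q"
    and "\<exists>S L. SQS q S \<and> bij_betw L {..<q} {..<q} \<and> step_property q S L"
  shows "real (N1 4 q) = real (q^2 * (q+2)) / 4"
proof -
  obtain S L where h: "SQS q S" "bij_betw L {..<q} {..<q}" "step_property q S L" using assms(3) by blast
  obtain S' where S': "SQS q S'" "step_property q S' id" using transport[OF h] by blast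
  define M where "M = {card C | C. sdc_code 4 q C}"
  define B where "B = real q^3/4 + real q^2/2"
  have cM: "card (code q S') \<in> M" using code_sdc[OF S'(1)] M_def by blast
  have lowc: "B \<le> real (card (code q S'))" using code_card[OF assms(2) S'] B_def by simp
  have upM: "real m \<le> B" if "m \<in> M" for m using that upper[OF _ assms(2)] M_def B_def by blast
  have finM: "finite M"
  proof -
    have "M \<subseteq> card ` Pow (words 4 q)" unfolding M_def sdc_code_def by blast
    thus ?thesis using words_fin finite_subset by blast
  qed
  have MaxM: "Max M \<in> M" using finM cM Max_in by blast
  have "card (code q S') \<le> Max M" using finM cM by simp
  hence "B \<le> real (Max M)" using lowc by linarith
  moreover have "real (Max M) \<le> B" using upM MaxM by blast
  ultimately have "real (N1 4 q) = B" unfolding N1_def M_def[symmetric] by linarith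
  thus ?thesis unfolding B_def by (simp add: power2_eq_square power3_eq_cube algebra_simps)
qed


end
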